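(* Let $\mathcal{C}_3=\mathbb{C}\{e_1,e_2,e_3\}$ be the complex Clifford algebra with generators satisfying $e_j^2=-1$ and $e_je_k=-e_ke_j$ ($j\neq k$), of dimension $8$, and let $e_{[3]}=e_1e_2e_3$, so that $e_{[3]}^2=1$. Let $\mathcal{C}_2\subset\mathcal{C}_3$ be the subalgebra with basis $1,e_1,e_2,e_{12}=e_1e_2$. Then every $a\in\mathcal{C}_3$ can be written as $a=a_0+a_1e_{[3]}$ with $a_0,a_1\in\mathcal{C}_2$. Define $\overline{a}=a_0-a_1e_{[3]}$ and $D_a=\mathrm{diag}(aI_2,\overline{a}I_2)$. Let $$P_2=\frac12\begin{pmatrix}1-ie_1 & e_2+ie_{12}\\ -e_2+ie_{12} & 1+ie_1\end{pmatrix}\ (=P_2^{-1}),$$ $$P_3=\frac12\begin{pmatrix}(1+e_{[3]})P_2 & -(1-e_{[3]})P_2\\ (1-e_{[3]})P_2 & (1+e_{[3]})P_2\end{pmatrix},\qquad P_3'=\frac12\begin{pmatrix}P_2^{-1}(1+e_{[3]}) & P_2^{-1}(1-e_{[3]})\\ -P_2^{-1}(1-e_{[3]}) & P_2^{-1}(1+e_{[3]})\end{pmatrix}.$$ Then $P_3$ is invertible with $P_3^{-1}=P_3'$, and $$P_3D_aP_3^{-1}=\begin{pmatrix}\phi_2(a_0)+\phi_2(a_1) & 0\\ 0 & \phi_2(a_0)-\phi_2(a_1)\end{pmatrix},$$ a block diagonal matrix with two $2\times 2$ complex blocks.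
   Context: For $b=b_0+b_1e_1+b_2e_2+b_3e_{12}\in\mathcal{C}_2$ ($b_j\in\mathbb{C}$), $\phi_2(b)=\begin{pmatrix}b_0+b_1i & -(b_2+b_3i)\\ b_2-b_3i & b_0-b_1i\end{pmatrix}\in\mathbb{C}^{2\times 2}$. $i$ is the imaginary unit of $\mathbb{C}$. For an element $c$ and a matrix $M$, $cM$ (resp. $Mc$) denotes the matrix with entries $cM_{jk}$ (resp. $M_{jk}c$). *)

theory Defs
  imports Complex_Main
begin

text \<open>Basis blades of C_3 are indexed by triples (b1,b2,b3) of booleans, standing for
  the ordered product e1^b1 e2^b2 e3^b3. An element of C_3 is a complex coefficient
  function on the 8 blades.\<close>

type_synonym blade = "bool \<times> bool \<times> bool"

typedef clif3 = "UNIV :: (blade \<Rightarrow> complex) set" by simp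

setup_lifting type_definition_clif3

definition bset :: "blade \<Rightarrow> nat set" where
  "bset = (\<lambda>(b1, b2, b3). {i. (i = 1 \<and> b1) \<or> (i = 2 \<and> b2) \<or> (i = 3 \<and> b3)})"

definition bxor :: "blade \<Rightarrow> blade \<Rightarrow> blade" where
  "bxor = (\<lambda>(a1, a2, a3) (b1, b2, b3). (a1 \<noteq> b1, a2 \<noteq> b2, a3 \<noteq> b3))"

text \<open>Sign of e_A e_B = sign * e_(A xor B), using e_j^2 = -1 and anticommutation.\<close>
definition bsign :: "blade \<Rightarrow> blade \<Rightarrow> complex" where
  "bsign A B = (-1) ^ (card {(i, j). i \<in> bset A \<and> j \<in> bset B \<and> j < i}
                       + card (bset A \<inter> bset B))"

instantiation clif3 :: ab_group_add
begin
lift_definition zero_clif3 :: clif3 is "\<lambda>_. 0" .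
lift_definition plus_clif3 :: "clif3 \<Rightarrow> clif3 \<Rightarrow> clif3" is "\<lambda>x y B. x B + y B" .
lift_definition minus_clif3 :: "clif3 \<Rightarrow> clif3 \<Rightarrow> clif3" is "\<lambda>x y B. x B - y B" .
lift_definition uminus_clif3 :: "clif3 \<Rightarrow> clif3" is "\<lambda>x B. - x B" .
instance by standard (transfer; auto simp: algebra_simps)+
end

instantiation clif3 :: "{times, one}"
begin
lift_definition one_clif3 :: clif3 is "\<lambda>B. if B = (False, False, False) then 1 else 0" .
lift_definition times_clif3 :: "clif3 \<Rightarrow> clif3 \<Rightarrow> clif3" is
  "\<lambda>x y C. \<Sum>A\<in>UNIV. \<Sum>B\<in>UNIV. if bxor A B = C then bsign A B * x A * y B else 0" .
instance ..
end

lift_definition scal :: "complex \<Rightarrow> clif3" is "\<lambda>c B. if B = (False, False, False) then c else 0" .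
lift_definition coeff :: "clif3 \<Rightarrow> blade \<Rightarrow> complex" is "\<lambda>x B. x B" .

lift_definition e1 :: clif3 is "\<lambda>B. if B = (True, False, False) then 1 else 0" .
lift_definition e2 :: clif3 is "\<lambda>B. if B = (False, True, False) then 1 else 0" .
lift_definition e3 :: clif3 is "\<lambda>B. if B = (False, False, True) then 1 else 0" .

definition e12 :: clif3 where "e12 = e1 * e2"
definition e123 :: clif3 where "e123 = e1 * e2 * e3"

definition C2 :: "clif3 set" where
  "C2 = {x. \<forall>b1 b2. coeff x (b1, b2, True) = 0}"

definition phi2 :: "clif3 \<Rightarrow> nat \<Rightarrow> nat \<Rightarrow> complex" where
  "phi2 b = (let b0 = coeff b (False, False, False); b1 = coeff b (True, False, False);
                 b2 = coeff b (False, True, False); b3 = coeff b (True, True, False) in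
     (\<lambda>i j. if i = 0 \<and> j = 0 then b0 + b1 * \<i>
            else if i = 0 \<and> j = 1 then - (b2 + b3 * \<i>)
            else if i = 1 \<and> j = 0 then b2 - b3 * \<i>
            else b0 - b1 * \<i>))"

definition mmul :: "nat \<Rightarrow> (nat \<Rightarrow> nat \<Rightarrow> clif3) \<Rightarrow> (nat \<Rightarrow> nat \<Rightarrow> clif3) \<Rightarrow> nat \<Rightarrow> nat \<Rightarrow> clif3" where
  "mmul n A B = (\<lambda>i j. \<Sum>k<n. A i k * B k j)"

definition idm :: "nat \<Rightarrow> nat \<Rightarrow> clif3" where
  "idm = (\<lambda>i j. if i = j then 1 else 0)"

definition lmul :: "clif3 \<Rightarrow> (nat \<Rightarrow> nat \<Rightarrow> clif3) \<Rightarrow> nat \<Rightarrow> nat \<Rightarrow> clif3" where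
  "lmul c M = (\<lambda>i j. c * M i j)"
definition rmul :: "(nat \<Rightarrow> nat \<Rightarrow> clif3) \<Rightarrow> clif3 \<Rightarrow> nat \<Rightarrow> nat \<Rightarrow> clif3" where
  "rmul M c = (\<lambda>i j. M i j * c)"

definition blk :: "(nat \<Rightarrow> nat \<Rightarrow> 'a) \<Rightarrow> (nat \<Rightarrow> nat \<Rightarrow> 'a) \<Rightarrow> (nat \<Rightarrow> nat \<Rightarrow> 'a) \<Rightarrow> (nat \<Rightarrow> nat \<Rightarrow> 'a)
                   \<Rightarrow> nat \<Rightarrow> nat \<Rightarrow> 'a" where
  "blk A B C D = (\<lambda>i j. if i < 2 then (if j < 2 then A i j else B i (j - 2))
                        else (if j < 2 then C (i - 2) j else D (i - 2) (j - 2)))"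

definition m2 :: "'a \<Rightarrow> 'a \<Rightarrow> 'a \<Rightarrow> 'a \<Rightarrow> nat \<Rightarrow> nat \<Rightarrow> 'a" where
  "m2 a b c d = (\<lambda>i j. if i = 0 then (if j = 0 then a else b) else (if j = 0 then c else d))"

definition P2 :: "nat \<Rightarrow> nat \<Rightarrow> clif3" where
  "P2 = lmul (scal (1/2)) (m2 (1 - scal \<i> * e1) (e2 + scal \<i> * e12)
                              (- e2 + scal \<i> * e12) (1 + scal \<i> * e1))"

text \<open>P2 is its own inverse, so P2^{-1} below is P2.\<close>
definition P3 :: "nat \<Rightarrow> nat \<Rightarrow> clif3" where
  "P3 = lmul (scal (1/2)) (blk (lmul (1 + e123) P2) (lmul (- (1 - e123)) P2)
                               (lmul (1 - e123) P2) (lmul (1 + e123) P2))"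

definition P3' :: "nat \<Rightarrow> nat \<Rightarrow> clif3" where
  "P3' = lmul (scal (1/2)) (blk (rmul P2 (1 + e123)) (rmul P2 (1 - e123))
                                (rmul P2 (- (1 - e123))) (rmul P2 (1 + e123)))"

definition Dm :: "clif3 \<Rightarrow> clif3 \<Rightarrow> nat \<Rightarrow> nat \<Rightarrow> clif3" where
  "Dm a abar = (\<lambda>i j. if i = j then (if i < 2 then a else abar) else 0)"

end

theory Submission
  imports Defs
begin

definition mk :: "complex \<Rightarrow> complex \<Rightarrow> complex \<Rightarrow> complex \<Rightarrow> complex \<Rightarrow> complex \<Rightarrow> complex \<Rightarrow> complex \<Rightarrow> clif3" where
  "mk c0 c1 c2 c3 c4 c5 c6 c7 = Abs_clif3 (\<lambda>(b1,b2,b3).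
     if b3 then (if b2 then (if b1 then c7 else c6) else (if b1 then c5 else c4))
     else (if b2 then (if b1 then c3 else c2) else (if b1 then c1 else c0)))"

lemma Rep_mk: "Rep_clif3 (mk c0 c1 c2 c3 c4 c5 c6 c7) = (\<lambda>(b1,b2,b3).
     if b3 then (if b2 then (if b1 then c7 else c6) else (if b1 then c5 else c4))
     else (if b2 then (if b1 then c3 else c2) else (if b1 then c1 else c0)))"
  unfolding mk_def by (simp add: Abs_clif3_inverse)

lemma UNIV_blade: "(UNIV :: blade set) = {(False,False,False),(True,False,False),(False,True,False),(True,True,False),
  (False,False,True),(True,False,True),(False,True,True),(True,True,True)}"
  by (auto)

lemma bset_eval: "bset (b1,b2,b3) = (if b1 then {1} else {}) \<union> (if b2 then {2} else {}) \<union> (if b3 then {3} else {})"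
  unfolding bset_def by auto

lemma pairs_eq: "{(i, j). i \<in> S \<and> j \<in> T \<and> j < (i::nat)} = (S \<times> T) \<inter> {(i,j). j < i}" by auto

lemma bsign_eval: "bsign (b1,b2,b3) (c1,c2,c3) = (-1) ^ (card ((bset (b1,b2,b3) \<times> bset (c1,c2,c3)) \<inter> {(i,j). j < i}) + card (bset (b1,b2,b3) \<inter> bset (c1,c2,c3)))"
  unfolding bsign_def pairs_eq ..

lemma bsign_tab:
  "bsign (False,False,False) (False,False,False) = 1"
  "bsign (False,False,False) (True,False,False) = 1"
  "bsign (False,False,False) (False,True,False) = 1"
  "bsign (False,False,False) (True,True,False) = 1"
  "bsign (False,False,False) (False,False,True) = 1"
  "bsign (False,False,False) (True,False,True) = 1"
  "bsign (False,False,False) (False,True,True) = 1"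
  "bsign (False,False,False) (True,True,True) = 1"
  "bsign (True,False,False) (False,False,False) = 1"
  "bsign (True,False,False) (True,False,False) = -1"
  "bsign (True,False,False) (False,True,False) = 1"
  "bsign (True,False,False) (True,True,False) = -1"
  "bsign (True,False,False) (False,False,True) = 1"
  "bsign (True,False,False) (True,False,True) = -1"
  "bsign (True,False,False) (False,True,True) = 1"
  "bsign (True,False,False) (True,True,True) = -1"
  "bsign (False,True,False) (False,False,False) = 1"
  "bsign (False,True,False) (True,False,False) = -1"
  "bsign (False,True,False) (False,True,False) = -1"
  "bsign (False,True,False) (True,True,False) = 1"
  "bsign (False,True,False) (False,False,True) = 1"
  "bsign (False,True,False) (True,False,True) = -1"
  "bsign (False,True,False) (False,True,True) = -1"
  "bsign (False,True,False) (True,True,True) = 1"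
  "bsign (True,True,False) (False,False,False) = 1"
  "bsign (True,True,False) (True,False,False) = 1"
  "bsign (True,True,False) (False,True,False) = -1"
  "bsign (True,True,False) (True,True,False) = -1"
  "bsign (True,True,False) (False,False,True) = 1"
  "bsign (True,True,False) (True,False,True) = 1"
  "bsign (True,True,False) (False,True,True) = -1"
  "bsign (True,True,False) (True,True,True) = -1"
  "bsign (False,False,True) (False,False,False) = 1"
  "bsign (False,False,True) (True,False,False) = -1"
  "bsign (False,False,True) (False,True,False) = -1"
  "bsign (False,False,True) (True,True,False) = 1"
  "bsign (False,False,True) (False,False,True) = -1"
  "bsign (False,False,True) (True,False,True) = 1"
  "bsign (False,False,True) (False,True,True) = 1"
  "bsign (False,False,True) (True,True,True) = -1"
  "bsign (True,False,True) (False,False,False) = 1"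
  "bsign (True,False,True) (True,False,False) = 1"
  "bsign (True,False,True) (False,True,False) = -1"
  "bsign (True,False,True) (True,True,False) = -1"
  "bsign (True,False,True) (False,False,True) = -1"
  "bsign (True,False,True) (True,False,True) = -1"
  "bsign (True,False,True) (False,True,True) = 1"
  "bsign (True,False,True) (True,True,True) = 1"
  "bsign (False,True,True) (False,False,False) = 1"
  "bsign (False,True,True) (True,False,False) = 1"
  "bsign (False,True,True) (False,True,False) = 1"
  "bsign (False,True,True) (True,True,False) = 1"
  "bsign (False,True,True) (False,False,True) = -1"
  "bsign (False,True,True) (True,False,True) = -1"
  "bsign (False,True,True) (False,True,True) = -1"
  "bsign (False,True,True) (True,True,True) = -1"
  "bsign (True,True,True) (False,False,False) = 1"
  "bsign (True,True,True) (True,False,False) = -1"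
  "bsign (True,True,True) (False,True,False) = 1"
  "bsign (True,True,True) (True,True,False) = -1"
  "bsign (True,True,True) (False,False,True) = -1"
  "bsign (True,True,True) (True,False,True) = 1"
  "bsign (True,True,True) (False,True,True) = -1"
  "bsign (True,True,True) (True,True,True) = 1"
  by (simp_all add: bsign_eval bset_eval)


lemma bxor_eval: "bxor (a1,a2,a3) (b1,b2,b3) = (a1 \<noteq> b1, a2 \<noteq> b2, a3 \<noteq> b3)"
  unfolding bxor_def by simp

lemma mk_mult: "mk a0 a1 a2 a3 a4 a5 a6 a7 * mk b0 b1 b2 b3 b4 b5 b6 b7 = mk (a0 * b0 - a1 * b1 - a2 * b2 - a3 * b3 - a4 * b4 - a5 * b5 - a6 * b6 + a7 * b7) (a0 * b1 + a1 * b0 + a2 * b3 - a3 * b2 + a4 * b5 - a5 * b4 - a6 * b7 - a7 * b6) (a0 * b2 - a1 * b3 + a2 * b0 + a3 * b1 + a4 * b6 + a5 * b7 - a6 * b4 + a7 * b5) (a0 * b3 + a1 * b2 - a2 * b1 + a3 * b0 - a4 * b7 + a5 * b6 - a6 * b5 - a7 * b4) (a0 * b4 - a1 * b5 - a2 * b6 - a3 * b7 + a4 * b0 + a5 * b1 + a6 * b2 - a7 * b3) (a0 * b5 + a1 * b4 + a2 * b7 - a3 * b6 - a4 * b1 + a5 * b0 + a6 * b3 + a7 * b2) (a0 * b6 - a1 * b7 + a2 * b4 + a3 * b5 - a4 * b2 - a5 * b3 + a6 * b0 - a7 * b1) (a0 * b7 + a1 * b6 - a2 * b5 + a3 * b4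 + a4 * b3 - a5 * b2 + a6 * b1 + a7 * b0)"
  apply (rule Rep_clif3_inject[THEN iffD1])
  apply (rule ext)
  subgoal for C
  apply (cases C)
  apply (simp add: times_clif3.rep_eq Rep_mk UNIV_blade bxor_eval bsign_tab)
  done
  done

lemma mk_add: "mk a0 a1 a2 a3 a4 a5 a6 a7 + mk b0 b1 b2 b3 b4 b5 b6 b7 = mk (a0+b0) (a1+b1) (a2+b2) (a3+b3) (a4+b4) (a5+b5) (a6+b6) (a7+b7)"
  by (rule Rep_clif3_inject[THEN iffD1]) (auto simp: plus_clif3.rep_eq Rep_mk)
lemma mk_diff: "mk a0 a1 a2 a3 a4 a5 a6 a7 - mk b0 b1 b2 b3 b4 b5 b6 b7 = mk (a0-b0) (a1-b1) (a2-b2) (a3-b3) (a4-b4) (a5-b5) (a6-b6) (a7-b7)"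
  by (rule Rep_clif3_inject[THEN iffD1]) (auto simp: minus_clif3.rep_eq Rep_mk)
lemma mk_uminus: "- mk a0 a1 a2 a3 a4 a5 a6 a7 = mk (-a0) (-a1) (-a2) (-a3) (-a4) (-a5) (-a6) (-a7)"
  by (rule Rep_clif3_inject[THEN iffD1]) (auto simp: uminus_clif3.rep_eq Rep_mk)
lemma mk_zero: "0 = mk 0 0 0 0 0 0 0 0"
  by (rule Rep_clif3_inject[THEN iffD1]) (auto simp: zero_clif3.rep_eq Rep_mk)
lemma mk_one: "1 = mk 1 0 0 0 0 0 0 0"
  by (rule Rep_clif3_inject[THEN iffD1]) (auto simp: one_clif3.rep_eq Rep_mk)
lemma mk_scal: "scal c = mk c 0 0 0 0 0 0 0"
  by (rule Rep_clif3_inject[THEN iffD1]) (auto simp: scal.rep_eq Rep_mk)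
lemma mk_e1: "e1 = mk 0 1 0 0 0 0 0 0"
  by (rule Rep_clif3_inject[THEN iffD1]) (auto simp: e1.rep_eq Rep_mk)
lemma mk_e2: "e2 = mk 0 0 1 0 0 0 0 0"
  by (rule Rep_clif3_inject[THEN iffD1]) (auto simp: e2.rep_eq Rep_mk)
lemma mk_e3: "e3 = mk 0 0 0 0 1 0 0 0"
  by (rule Rep_clif3_inject[THEN iffD1]) (auto simp: e3.rep_eq Rep_mk)
lemma mk_e12: "e12 = mk 0 0 0 1 0 0 0 0"
  by (simp add: e12_def mk_e1 mk_e2 mk_mult)
lemma mk_e123: "e123 = mk 0 0 0 0 0 0 0 1"
  by (simp add: e123_def mk_e1 mk_e2 mk_e3 mk_mult)

lemma coeff_mk:
  "coeff (mk c0 c1 c2 c3 c4 c5 c6 c7) (False,False,False) = c0"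
  "coeff (mk c0 c1 c2 c3 c4 c5 c6 c7) (True,False,False) = c1"
  "coeff (mk c0 c1 c2 c3 c4 c5 c6 c7) (False,True,False) = c2"
  "coeff (mk c0 c1 c2 c3 c4 c5 c6 c7) (True,True,False) = c3"
  "coeff (mk c0 c1 c2 c3 c4 c5 c6 c7) (False,False,True) = c4"
  "coeff (mk c0 c1 c2 c3 c4 c5 c6 c7) (True,False,True) = c5"
  "coeff (mk c0 c1 c2 c3 c4 c5 c6 c7) (False,True,True) = c6"
  "coeff (mk c0 c1 c2 c3 c4 c5 c6 c7) (True,True,True) = c7"
  by (simp_all add: coeff.rep_eq Rep_mk)

lemma mk_eq: "(mk a0 a1 a2 a3 a4 a5 a6 a7 = mk b0 b1 b2 b3 b4 b5 b6 b7) \<longleftrightarrow>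
  a0 = b0 \<and> a1 = b1 \<and> a2 = b2 \<and> a3 = b3 \<and> a4 = b4 \<and> a5 = b5 \<and> a6 = b6 \<and> a7 = b7"
proof
  assume h: "mk a0 a1 a2 a3 a4 a5 a6 a7 = mk b0 b1 b2 b3 b4 b5 b6 b7"
  have "coeff (mk a0 a1 a2 a3 a4 a5 a6 a7) B = coeff (mk b0 b1 b2 b3 b4 b5 b6 b7) B" for B
    using h by simp
  from this[of "(False,False,False)"] this[of "(True,False,False)"] this[of "(False,True,False)"]
    this[of "(True,True,False)"] this[of "(False,False,True)"] this[of "(True,False,True)"]
    this[of "(False,True,True)"] this[of "(True,True,True)"]
  show "a0 = b0 \<and> a1 = b1 \<and> a2 = b2 \<and> a3 = b3 \<and> a4 = b4 \<and> a5 = b5 \<and> a6 = b6 \<and> a7 = b7"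
    by (simp add: coeff_mk)
qed simp

lemma mk_surj: "\<exists>c0 c1 c2 c3 c4 c5 c6 c7. x = mk c0 c1 c2 c3 c4 c5 c6 c7"
proof -
  have "x = mk (coeff x (False,False,False)) (coeff x (True,False,False)) (coeff x (False,True,False))
     (coeff x (True,True,False)) (coeff x (False,False,True)) (coeff x (True,False,True))
     (coeff x (False,True,True)) (coeff x (True,True,True))"
    by (rule Rep_clif3_inject[THEN iffD1]) (auto simp: coeff.rep_eq Rep_mk)
  then show ?thesis by blast
qed

lemma C2_mk: "mk c0 c1 c2 c3 c4 c5 c6 c7 \<in> C2 \<longleftrightarrow> c4 = 0 \<and> c5 = 0 \<and> c6 = 0 \<and> c7 = 0"
  unfolding C2_def by (simp add: all_bool_eq coeff_mk conj_commute conj_left_commute)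

lemma phi2_mk: "phi2 (mk c0 c1 c2 c3 c4 c5 c6 c7) = (\<lambda>i j. if i = 0 \<and> j = 0 then c0 + c1 * \<i>
            else if i = 0 \<and> j = 1 then - (c2 + c3 * \<i>)
            else if i = 1 \<and> j = 0 then c2 - c3 * \<i>
            else c0 - c1 * \<i>)"
  unfolding phi2_def by (simp add: coeff_mk Let_def)

lemmas mk_simps = mk_mult mk_add mk_diff mk_uminus mk_zero mk_one mk_scal mk_e1 mk_e2 mk_e3 mk_e12 mk_e123

lemma P2_tab:
  "P2 0 0 = (mk (1 / 2) (- (1 / 2 * \<i>)) 0 0 0 0 0 0)"
  "P2 0 1 = (mk 0 0 (1 / 2) (1 / 2 * \<i>) 0 0 0 0)"
  "P2 1 0 = (mk 0 0 (- (1 / 2)) (1 / 2 * \<i>) 0 0 0 0)"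
  "P2 1 1 = (mk (1 / 2) (1 / 2 * \<i>) 0 0 0 0 0 0)"
  by (simp_all add: P2_def P3_def P3'_def lmul_def rmul_def blk_def m2_def mk_simps mk_eq)

lemma P3_tab:
  "P3 0 0 = (mk (1 / 4) (- (1 / 4 * \<i>)) 0 0 0 0 (1 / 4 * \<i>) (1 / 4))"
  "P3 0 1 = (mk 0 0 (1 / 4) (1 / 4 * \<i>) (- (1 / 4 * \<i>)) (1 / 4) 0 0)"
  "P3 0 2 = (mk (- (1 / 4)) (1 / 4 * \<i>) 0 0 0 0 (1 / 4 * \<i>) (1 / 4))"
  "P3 0 3 = (mk 0 0 (- (1 / 4)) (- (1 / 4 * \<i>)) (- (1 / 4 * \<i>)) (1 / 4) 0 0)"
  "P3 1 0 = (mk 0 0 (- (1 / 4)) (1 / 4 * \<i>) (- (1 / 4 * \<i>)) (- (1 / 4)) 0 0)"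
  "P3 1 1 = (mk (1 / 4) (1 / 4 * \<i>) 0 0 0 0 (- (1 / 4 * \<i>)) (1 / 4))"
  "P3 1 2 = (mk 0 0 (1 / 4) (- (1 / 4 * \<i>)) (- (1 / 4 * \<i>)) (- (1 / 4)) 0 0)"
  "P3 1 3 = (mk (- (1 / 4)) (- (1 / 4 * \<i>)) 0 0 0 0 (- (1 / 4 * \<i>)) (1 / 4))"
  "P3 2 0 = (mk (1 / 4) (- (1 / 4 * \<i>)) 0 0 0 0 (- (1 / 4 * \<i>)) (- (1 / 4)))"
  "P3 2 1 = (mk 0 0 (1 / 4) (1 / 4 * \<i>) (1 / 4 * \<i>) (- (1 / 4)) 0 0)"
  "P3 2 2 = (mk (1 / 4) (- (1 / 4 * \<i>)) 0 0 0 0 (1 / 4 * \<i>) (1 / 4))"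
  "P3 2 3 = (mk 0 0 (1 / 4) (1 / 4 * \<i>) (- (1 / 4 * \<i>)) (1 / 4) 0 0)"
  "P3 3 0 = (mk 0 0 (- (1 / 4)) (1 / 4 * \<i>) (1 / 4 * \<i>) (1 / 4) 0 0)"
  "P3 3 1 = (mk (1 / 4) (1 / 4 * \<i>) 0 0 0 0 (1 / 4 * \<i>) (- (1 / 4)))"
  "P3 3 2 = (mk 0 0 (- (1 / 4)) (1 / 4 * \<i>) (- (1 / 4 * \<i>)) (- (1 / 4)) 0 0)"
  "P3 3 3 = (mk (1 / 4) (1 / 4 * \<i>) 0 0 0 0 (- (1 / 4 * \<i>)) (1 / 4))"
  by (simp_all add: P2_def P3_def P3'_def lmul_def rmul_def blk_def m2_def mk_simps mk_eq)

lemma P3p_tab: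
  "P3' 0 0 = (mk (1 / 4) (- (1 / 4 * \<i>)) 0 0 0 0 (1 / 4 * \<i>) (1 / 4))"
  "P3' 0 1 = (mk 0 0 (1 / 4) (1 / 4 * \<i>) (- (1 / 4 * \<i>)) (1 / 4) 0 0)"
  "P3' 0 2 = (mk (1 / 4) (- (1 / 4 * \<i>)) 0 0 0 0 (- (1 / 4 * \<i>)) (- (1 / 4)))"
  "P3' 0 3 = (mk 0 0 (1 / 4) (1 / 4 * \<i>) (1 / 4 * \<i>) (- (1 / 4)) 0 0)"
  "P3' 1 0 = (mk 0 0 (- (1 / 4)) (1 / 4 * \<i>) (- (1 / 4 * \<i>)) (- (1 / 4)) 0 0)"
  "P3' 1 1 = (mk (1 / 4) (1 / 4 * \<i>) 0 0 0 0 (- (1 / 4 * \<i>)) (1 / 4))"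
  "P3' 1 2 = (mk 0 0 (- (1 / 4)) (1 / 4 * \<i>) (1 / 4 * \<i>) (1 / 4) 0 0)"
  "P3' 1 3 = (mk (1 / 4) (1 / 4 * \<i>) 0 0 0 0 (1 / 4 * \<i>) (- (1 / 4)))"
  "P3' 2 0 = (mk (- (1 / 4)) (1 / 4 * \<i>) 0 0 0 0 (1 / 4 * \<i>) (1 / 4))"
  "P3' 2 1 = (mk 0 0 (- (1 / 4)) (- (1 / 4 * \<i>)) (- (1 / 4 * \<i>)) (1 / 4) 0 0)"
  "P3' 2 2 = (mk (1 / 4) (- (1 / 4 * \<i>)) 0 0 0 0 (1 / 4 * \<i>) (1 / 4))"
  "P3' 2 3 = (mk 0 0 (1 / 4) (1 / 4 * \<i>) (- (1 / 4 * \<i>)) (1 / 4) 0 0)"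
  "P3' 3 0 = (mk 0 0 (1 / 4) (- (1 / 4 * \<i>)) (- (1 / 4 * \<i>)) (- (1 / 4)) 0 0)"
  "P3' 3 1 = (mk (- (1 / 4)) (- (1 / 4 * \<i>)) 0 0 0 0 (- (1 / 4 * \<i>)) (1 / 4))"
  "P3' 3 2 = (mk 0 0 (- (1 / 4)) (1 / 4 * \<i>) (- (1 / 4 * \<i>)) (- (1 / 4)) 0 0)"
  "P3' 3 3 = (mk (1 / 4) (1 / 4 * \<i>) 0 0 0 0 (- (1 / 4 * \<i>)) (1 / 4))"
  by (simp_all add: P2_def P3_def P3'_def lmul_def rmul_def blk_def m2_def mk_simps mk_eq)

lemma all4: "(\<forall>i<4::nat. P i) \<longleftrightarrow> P 0 \<and> P 1 \<and> P 2 \<and> P 3"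
  by (auto simp: less_Suc_eq numeral_eq_Suc)
lemma all2: "(\<forall>i<2::nat. P i) \<longleftrightarrow> P 0 \<and> P 1"
  by (auto simp: less_Suc_eq numeral_eq_Suc)
lemma sum4: "(\<Sum>k<4::nat. f k) = f 0 + f 1 + f 2 + f 3"
  by (simp add: numeral_eq_Suc add.commute add.left_commute)
lemma sum2: "(\<Sum>k<2::nat. f k) = f 0 + f 1"
  by (simp add: numeral_eq_Suc add.commute)

lemma part1: "\<forall>a. \<exists>!(a0, a1). a0 \<in> C2 \<and> a1 \<in> C2 \<and> a = a0 + a1 * e123"
proof
  fix a
  obtain c0 c1 c2 c3 c4 c5 c6 c7 where a: "a = mk c0 c1 c2 c3 c4 c5 c6 c7" using mk_surj by blast
  show "\<exists>!(a0, a1). a0 \<in> C2 \<and> a1 \<in> C2 \<and> a = a0 + a1 * e123"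
  proof (rule ex1I[where a="(mk c0 c1 c2 c3 0 0 0 0, mk c7 (-c6) c5 (-c4) 0 0 0 0)"])
    show "case (mk c0 c1 c2 c3 0 0 0 0, mk c7 (-c6) c5 (-c4) 0 0 0 0) of (a0, a1) \<Rightarrow> a0 \<in> C2 \<and> a1 \<in> C2 \<and> a = a0 + a1 * e123"
      by (simp add: a C2_mk mk_simps mk_eq)
  next
    fix p assume h: "case p of (a0, a1) \<Rightarrow> a0 \<in> C2 \<and> a1 \<in> C2 \<and> a = a0 + a1 * e123"
    obtain x y where p: "p = (x, y)" by (cases p)
    obtain x0 x1 x2 x3 x4 x5 x6 x7 where x: "x = mk x0 x1 x2 x3 x4 x5 x6 x7" using mk_surj by blast
    obtain y0 y1 y2 y3 y4 y5 y6 y7 where y: "y = mk y0 y1 y2 y3 y4 y5 y6 y7" using mk_surj by blast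
    show "p = (mk c0 c1 c2 c3 0 0 0 0, mk c7 (-c6) c5 (-c4) 0 0 0 0)"
      using h by (simp add: p x y a C2_mk mk_simps mk_eq)
  qed
qed

lemma part2: "\<forall>i<2. \<forall>j<2. mmul 2 P2 P2 i j = idm i j"
  by (simp add: all2 mmul_def sum2 P2_tab P2_tab[unfolded One_nat_def] idm_def mk_simps mk_eq)

lemma part3: "\<forall>i<4. \<forall>j<4. mmul 4 P3 P3' i j = idm i j \<and> mmul 4 P3' P3 i j = idm i j"
  by (simp add: all4 mmul_def sum4 P3_tab P3p_tab P3_tab[unfolded One_nat_def] P3p_tab[unfolded One_nat_def] idm_def mk_simps mk_eq)

lemma part4: "\<forall>a a0 a1. a0 \<in> C2 \<longrightarrow> a1 \<in> C2 \<longrightarrow> a = a0 + a1 * e123 \<longrightarrow>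
         (\<forall>i<4. \<forall>j<4.
            mmul 4 (mmul 4 P3 (Dm a (a0 - a1 * e123))) P3' i j
            = scal (blk (\<lambda>k l. phi2 a0 k l + phi2 a1 k l) (\<lambda>_ _. 0) (\<lambda>_ _. 0)
                        (\<lambda>k l. phi2 a0 k l - phi2 a1 k l) i j))"
proof (rule allI, rule allI, rule allI, rule impI, rule impI, rule impI)
  fix a a0 a1 assume h0: "a0 \<in> C2" and h1: "a1 \<in> C2" and ha: "a = a0 + a1 * e123"
  obtain x0 x1 x2 x3 x4 x5 x6 x7 where x: "a0 = mk x0 x1 x2 x3 x4 x5 x6 x7" using mk_surj by blast
  obtain y0 y1 y2 y3 y4 y5 y6 y7 where y: "a1 = mk y0 y1 y2 y3 y4 y5 y6 y7" using mk_surj by blast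
  have x': "a0 = mk x0 x1 x2 x3 0 0 0 0" using h0 x by (simp add: C2_mk)
  have y': "a1 = mk y0 y1 y2 y3 0 0 0 0" using h1 y by (simp add: C2_mk)
  show "\<forall>i<4. \<forall>j<4.
            mmul 4 (mmul 4 P3 (Dm a (a0 - a1 * e123))) P3' i j
            = scal (blk (\<lambda>k l. phi2 a0 k l + phi2 a1 k l) (\<lambda>_ _. 0) (\<lambda>_ _. 0)
                        (\<lambda>k l. phi2 a0 k l - phi2 a1 k l) i j)"
    unfolding ha x' y'
    apply (simp add: all4 mmul_def sum4 P3_tab P3p_tab P3_tab[unfolded One_nat_def] P3p_tab[unfolded One_nat_def]
       Dm_def blk_def phi2_mk mk_simps mk_eq)
    apply (simp add: field_simps)
    done
qed

theorem theorem12: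
  shows "(\<forall>a. \<exists>!(a0, a1). a0 \<in> C2 \<and> a1 \<in> C2 \<and> a = a0 + a1 * e123)
    \<and> (\<forall>i<2. \<forall>j<2. mmul 2 P2 P2 i j = idm i j)
    \<and> (\<forall>i<4. \<forall>j<4. mmul 4 P3 P3' i j = idm i j \<and> mmul 4 P3' P3 i j = idm i j)
    \<and> (\<forall>a a0 a1. a0 \<in> C2 \<longrightarrow> a1 \<in> C2 \<longrightarrow> a = a0 + a1 * e123 \<longrightarrow>
         (\<forall>i<4. \<forall>j<4.
            mmul 4 (mmul 4 P3 (Dm a (a0 - a1 * e123))) P3' i j
            = scal (blk (\<lambda>k l. phi2 a0 k l + phi2 a1 k l) (\<lambda>_ _. 0) (\<lambda>_ _. 0)
                        (\<lambda>k l. phi2 a0 k l - phi2 a1 k l) i j)))"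
  using part1 part2 part3 part4 by blast

end
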